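(* Consider a hyperfractal with $n$ nodes and $d_F>2$, with radio range $R_n=1/\sqrt{n}$. Let $\epsilon>0$ and $H(n)=\left\lceil\frac{\log(n^{1/2-\epsilon}p/2)}{\log(2/q)}\right\rceil$. Then the probability that a street of level $H(n)$ has at least one inter-node gap larger than $R_n$ is at most $n e^{-(q/2)n^{\epsilon}}$.
   Context: Hyperfractal model: the map is the unit square $[0,1]^2$. For $l\ge 0$ let $\mathcal{X}_l=\{(b2^{-(l+1)},y): b=1,3,\dots,2^{l+1}-1,\ y\in[0,1]\}\cup\{(x,b2^{-(l+1)}): b=1,3,\dots,2^{l+1}-1,\ x\in[0,1]\}$; each such segment is a street of level $l$. Fix $p\in(0,1)$, $q=1-p$; $d_F=\log(4/q)/\log 2$. The $n$ mobile nodes form a Poisson point process on $\bigcup_l\mathcal{X}_l$ with total mean $n$ and one-dimensional intensity $\lambda_l=n(p/2)(q/2)^l$ on $\mathcal{X}_l$. An inter-node gap on a street is the distance between a node and the next node along that street. *)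

theory Defs
  imports "HOL-Probability.Probability"
begin

text \<open>A street is identified with the unit segment [0,1] (its arclength
parametrisation).  A homogeneous Poisson point process of (one-dimensional)
intensity lam on [0,1] is realised in the standard way: the number of points
is Poisson(lam) distributed, and given that there are k points they are
k i.i.d. uniform points on [0,1].  poisson_pp_prob lam E is the probability
that the random point set satisfies the event E.\<close>

definition unif01 :: "real measure" where
  "unif01 = uniform_measure lborel {0..1}"

definition poisson_pp_prob :: "real \<Rightarrow> (real set \<Rightarrow> bool) \<Rightarrow> real" where
  "poisson_pp_prob lam E =
     (\<Sum>k. exp (- lam) * lam ^ k / fact k *
        measure (PiM {..<k} (\<lambda>_. unif01))
          {x \<in> space (PiM {..<k} (\<lambda>_. unif01)). E (x ` {..<k})})"

definition hf_intensity :: "nat \<Rightarrow> real \<Rightarrow> nat \<Rightarrow> real" where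
  "hf_intensity n p l = real n * (p / 2) * ((1 - p) / 2) ^ l"

definition hf_dim :: "real \<Rightarrow> real" where
  "hf_dim p = log 2 (4 / (1 - p))"

definition has_gap_larger :: "real \<Rightarrow> real set \<Rightarrow> bool" where
  "has_gap_larger R S \<longleftrightarrow>
     (\<exists>x\<in>S. \<exists>y\<in>S. x < y \<and> (\<forall>z\<in>S. \<not> (x < z \<and> z < y)) \<and> y - x > R)"

definition H_level :: "nat \<Rightarrow> real \<Rightarrow> real \<Rightarrow> int" where
  "H_level n p \<epsilon> = \<lceil>ln (real n powr (1/2 - \<epsilon>) * p / 2) / ln (2 / (1 - p))\<rceil>"

end

theory Submission
  imports Defs
begin

lemma unif01_prob: "prob_space unif01"
  unfolding unif01_def by (rule prob_space_uniform_measure) auto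

lemma sets_unif01[simp]: "sets unif01 = sets borel"
  unfolding unif01_def by simp

lemma measure_unif01: "A \<in> sets borel \<Longrightarrow> measure unif01 A = measure lborel ({0..1} \<inter> A)"
  unfolding unif01_def by (subst measure_uniform_measure) auto

lemma measure_PiE_unif:
  assumes "finite I" "\<And>i. i\<in>I \<Longrightarrow> A i \<in> sets borel"
  shows "measure (PiM I (\<lambda>_. unif01)) (PiE I A) = (\<Prod>i\<in>I. measure unif01 (A i))"
proof -
  interpret product_prob_space "\<lambda>_. unif01" I
    by (simp add: product_prob_space_def product_prob_space_axioms_def product_sigma_finite_def
        unif01_prob prob_space_imp_sigma_finite)
  have "emeasure (PiM I (\<lambda>_. unif01)) (PiE I A) = (\<Prod>i\<in>I. emeasure unif01 (A i))"
    using assms by (intro emeasure_PiM) auto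
  also have "\<dots> = (\<Prod>i\<in>I. ennreal (measure unif01 (A i)))"
    by (simp add: M.emeasure_eq_measure)
  also have "\<dots> = ennreal (\<Prod>i\<in>I. measure unif01 (A i))"
    by (rule prod_ennreal) auto
  finally show ?thesis
    by (simp add: P.emeasure_eq_measure prod_nonneg)
qed

lemma event_bound:
  fixes R \<delta> :: real and m k :: nat
  assumes R: "0 < R" "R \<le> 1" and m: "m > 0" and d: "\<delta> = (1-R)/m" and dR: "\<delta> \<le> R"
  shows "measure (PiM {..<k} (\<lambda>_. unif01))
           {x \<in> space (PiM {..<k} (\<lambda>_. unif01)). has_gap_larger R (x ` {..<k})}
         \<le> real k * (1-R) * (1-R+\<delta>)^(k-1)"
proof -
  define M where "M = PiM {..<k} (\<lambda>_. unif01)"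
  interpret P: prob_space M unfolding M_def by (intro prob_space_PiM unif01_prob)
  define B where "B j = PiE {..<k} (\<lambda>l. if l = j then - {0..1::real} else UNIV)" for j
  define C where "C p = PiE {..<k} (\<lambda>l. if l = fst p then {real (snd p)*\<delta>..<(real (snd p)+1)*\<delta>}
                        else - {(real (snd p)+1)*\<delta>..real (snd p)*\<delta>+R})" for p
  have d0: "\<delta> \<ge> 0" using d R by simp
  have md: "real m * \<delta> = 1 - R" using d m by simp
  have spaceM: "space M = PiE {..<k} (\<lambda>_. UNIV)"
    unfolding M_def by (simp add: space_PiM unif01_def)
  have Bs: "B j \<in> sets M" for j unfolding B_def M_def by (intro sets_PiM_I_finite) auto
  have Cs: "C p \<in> sets M" for p unfolding C_def M_def by (intro sets_PiM_I_finite) auto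
  have sub: "{x \<in> space M. has_gap_larger R (x ` {..<k})}
        \<subseteq> (\<Union>j\<in>{..<k}. B j) \<union> (\<Union>p\<in>{..<k}\<times>{..<m}. C p)"
  proof
    fix x assume xin: "x \<in> {x \<in> space M. has_gap_larger R (x ` {..<k})}"
    then have xs: "x \<in> PiE {..<k} (\<lambda>_. UNIV)" and g: "has_gap_larger R (x ` {..<k})"
      using spaceM by auto
    show "x \<in> (\<Union>j\<in>{..<k}. B j) \<union> (\<Union>p\<in>{..<k}\<times>{..<m}. C p)"
    proof (cases "\<exists>j<k. x j \<notin> {0..1}")
      case True
      then obtain j where j: "j < k" "x j \<notin> {0..1}" by auto
      have "x \<in> B j" unfolding B_def using xs j by (auto simp: PiE_iff)
      then show ?thesis using j by auto
    next
      case False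
      then have in01: "\<And>j. j < k \<Longrightarrow> 0 \<le> x j \<and> x j \<le> 1" by auto
      from g obtain i j where ij: "i < k" "j < k" "x i < x j"
        and nb: "\<forall>z\<in>x ` {..<k}. \<not> (x i < z \<and> z < x j)" and gap: "x j - x i > R"
        unfolding has_gap_larger_def by auto
      have "x j - x i \<le> 1" using in01[OF ij(1)] in01[OF ij(2)] by auto
      then have R1: "R < 1" using gap by auto
      then have dpos: "\<delta> > 0" using d m by simp
      define a where "a = nat \<lfloor>x i / \<delta>\<rfloor>"
      have fl0: "\<lfloor>x i / \<delta>\<rfloor> \<ge> 0" using in01[OF ij(1)] dpos by simp
      have a1: "real a * \<delta> \<le> x i"
      proof -
        have "real a = of_int \<lfloor>x i / \<delta>\<rfloor>" using fl0 unfolding a_def by simp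
        also have "\<dots> \<le> x i / \<delta>" by simp
        finally show ?thesis using dpos by (simp add: field_simps)
      qed
      have a2: "x i < (real a + 1) * \<delta>"
      proof -
        have "x i / \<delta> < of_int \<lfloor>x i / \<delta>\<rfloor> + 1" by linarith
        also have "of_int \<lfloor>x i / \<delta>\<rfloor> = real a" using fl0 unfolding a_def by simp
        finally show ?thesis using dpos by (simp add: field_simps)
      qed
      have "x i < 1 - R" using gap in01[OF ij(2)] by auto
      then have "real a * \<delta> < real m * \<delta>" using a1 md by linarith
      then have am: "a < m" using dpos by simp
      have "x \<in> C (i, a)" unfolding C_def PiE_iff
      proof (intro conjI ballI)
        fix l assume l: "l \<in> {..<k}"
        show "x l \<in> (if l = fst (i, a) then {real (snd (i, a))*\<delta>..<(real (snd (i, a))+1)*\<delta>}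
                        else - {(real (snd (i, a))+1)*\<delta>..real (snd (i, a))*\<delta>+R})"
        proof (cases "l = i")
          case True then show ?thesis using a1 a2 by simp
        next
          case False
          have "x l \<notin> {(real a+1)*\<delta>..real a*\<delta>+R}"
          proof
            assume xl: "x l \<in> {(real a+1)*\<delta>..real a*\<delta>+R}"
            then have "x l < x j" using a1 gap by auto
            moreover have "x i < x l" using xl a2 by auto
            ultimately show False using nb l by auto
          qed
          then show ?thesis using False by simp
        qed
      next
        show "x \<in> extensional {..<k}" using xs by (auto simp: PiE_iff)
      qed
      then show ?thesis using ij am by auto
    qed
  qed
  have "measure M {x \<in> space M. has_gap_larger R (x ` {..<k})}
      \<le> measure M ((\<Union>j\<in>{..<k}. B j) \<union> (\<Union>p\<in>{..<k}\<times>{..<m}. C p))"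
    by (rule P.finite_measure_mono[OF sub]) (use Bs Cs in auto)
  also have "\<dots> \<le> measure M (\<Union>j\<in>{..<k}. B j) + measure M (\<Union>p\<in>{..<k}\<times>{..<m}. C p)"
    by (rule measure_subadditive) (use Bs Cs in auto)
  also have "\<dots> \<le> (\<Sum>j\<in>{..<k}. measure M (B j)) + (\<Sum>p\<in>{..<k}\<times>{..<m}. measure M (C p))"
    by (intro add_mono P.finite_measure_subadditive_finite) (use Bs Cs in auto)
  also have "(\<Sum>j\<in>{..<k}. measure M (B j)) = 0"
  proof (intro sum.neutral ballI)
    fix j assume j: "j \<in> {..<k}"
    have "measure M (B j) = (\<Prod>l\<in>{..<k}. measure unif01 (if l = j then - {0..1::real} else UNIV))"
      unfolding M_def B_def by (intro measure_PiE_unif) auto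
    also have "\<dots> = 0"
      using j by (intro prod_zero) (auto simp: measure_unif01)
    finally show "measure M (B j) = 0" .
  qed
  also have "(\<Sum>p\<in>{..<k}\<times>{..<m}. measure M (C p)) \<le> (\<Sum>p\<in>{..<k}\<times>{..<m}. \<delta> * (1-R+\<delta>)^(k-1))"
  proof (intro sum_mono)
    fix p assume p: "p \<in> {..<k}\<times>{..<m}"
    obtain i a where pa: "p = (i, a)" by fastforce
    have i: "i < k" and a: "a < m" using p pa by auto
    define A where "A = {real a*\<delta>..<(real a+1)*\<delta>}"
    define I where "I = {(real a+1)*\<delta>..real a*\<delta>+R}"
    have "measure M (C p) = (\<Prod>l\<in>{..<k}. measure unif01 (if l = i then A else - I))"
      unfolding M_def C_def pa A_def I_def fst_conv snd_conv by (intro measure_PiE_unif) auto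
    also have "\<dots> = measure unif01 A * (\<Prod>l\<in>{..<k}-{i}. measure unif01 (- I))"
      using i by (subst prod.remove[of _ i]) auto
    also have "\<dots> = measure unif01 A * measure unif01 (- I) ^ (k-1)"
      using i by simp
    also have "measure unif01 A = \<delta>"
    proof -
      have "real a + 1 \<le> real m" using a by simp
      then have "(real a + 1) * \<delta> \<le> real m * \<delta>" using d0 by (intro mult_right_mono)
      then have u1: "(real a + 1) * \<delta> \<le> 1" using md R by linarith
      have u2: "0 \<le> real a * \<delta>" using d0 by simp
      have "A \<subseteq> {0..1}" unfolding A_def
      proof
        fix t assume "t \<in> {real a*\<delta>..<(real a+1)*\<delta>}"
        then show "t \<in> {0..1}" using u1 u2 by simp
      qed
      then have "{0..1} \<inter> A = A" by (rule Int_absorb1)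
      then show ?thesis unfolding A_def using d0 by (simp add: measure_unif01 field_simps)
    qed
    also have "measure unif01 (- I) = 1 - R + \<delta>"
    proof -
      have "real a + 1 \<le> real m" using a by simp
      then have "(real a + 1) * \<delta> \<le> real m * \<delta>" using d0 by (intro mult_right_mono)
      moreover have "(real a + 1) * \<delta> = real a * \<delta> + \<delta>" by (simp add: algebra_simps)
      ultimately have u1: "real a * \<delta> + R \<le> 1" using md R d0 by linarith
      have u2: "0 \<le> (real a + 1) * \<delta>" using d0 by simp
      have Isub: "I \<subseteq> {0..1}" unfolding I_def
      proof
        fix t assume "t \<in> {(real a+1)*\<delta>..real a*\<delta>+R}"
        then show "t \<in> {0..1}" using u1 u2 by simp
      qed
      have "{0..1} \<inter> - I = {0..1} - I" by auto
      then have "measure unif01 (- I) = measure lborel ({0..1} - I)"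
        by (simp add: measure_unif01 I_def)
      also have "\<dots> = measure lborel {0..1::real} - measure lborel I"
        using Isub by (intro measure_Diff) (auto simp: I_def)
      also have "\<dots> = 1 - R + \<delta>" unfolding I_def using dR by (simp add: field_simps)
      finally show ?thesis .
    qed
    finally show "measure M (C p) \<le> \<delta> * (1-R+\<delta>)^(k-1)" by simp
  qed
  also have "(\<Sum>p\<in>{..<k}\<times>{..<m}. \<delta> * (1-R+\<delta>)^(k-1)) = real k * (1-R) * (1-R+\<delta>)^(k-1)"
    using md by (simp add: card_cartesian_product)
  finally show ?thesis unfolding M_def by simp
qed


lemma aux_series0:
  fixes s lam r L Z K F :: real
  assumes "K \<noteq> 0" "F \<noteq> 0"
  shows "s * (lam * L) / (K * F) * (K * r * Z) = s * lam * r * (L * Z / F)"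
  using assms by (simp add: field_simps)

lemma aux_series:
  fixes s lam r z :: real
  shows "s * (lam * lam ^ j) / (real (Suc j) * fact j) * (real (Suc j) * r * z ^ j)
         = s * lam * r * ((lam * z)^j / fact j)"
  unfolding power_mult_distrib by (rule aux_series0) auto

lemma series_bound:
  fixes lam R \<delta> :: real and m :: nat
  assumes lam: "lam \<ge> 0" and R: "0 < R" "R \<le> 1" and m: "m > 0" and d: "\<delta> = (1-R)/m" and dR: "\<delta> \<le> R"
  shows "poisson_pp_prob lam (has_gap_larger R) \<le> lam * (1-R) * exp (- lam) * exp (lam * (1-R+\<delta>))"
proof -
  define meas where "meas (k::nat) = measure (PiM {..<k} (\<lambda>_. unif01))
          {x \<in> space (PiM {..<k} (\<lambda>_. unif01)). has_gap_larger R (x ` {..<k})}" for k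
  define t where "t (k::nat) = exp (- lam) * lam ^ k / fact k * meas k" for k
  define g where "g k = exp (- lam) * lam ^ k / fact k * (real k * (1-R) * (1-R+\<delta>)^(k-1))" for k :: nat
  define c where "c = exp (- lam) * lam * (1-R)"
  define y where "y = lam * (1-R+\<delta>)"
  have d0: "\<delta> \<ge> 0" using d R m by simp
  have t0: "t k \<ge> 0" for k unfolding t_def meas_def using lam by simp
  have tg: "t k \<le> g k" for k
    unfolding t_def g_def meas_def
    by (intro mult_left_mono event_bound[OF R m d dR]) (use lam in auto)
  have "(\<lambda>j. y^j /\<^sub>R fact j) sums exp y" by (rule exp_converges)
  then have "(\<lambda>j. c * (y^j / fact j)) sums (c * exp y)"
    by (intro sums_mult) (simp add: divide_inverse_commute scaleR_conv_of_real)
  moreover have "(\<lambda>j. c * (y^j / fact j)) = (\<lambda>j. g (Suc j))"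
  proof
    fix j :: nat
    have "g (Suc j) = exp (- lam) * (lam * lam ^ j) / (real (Suc j) * fact j) * (real (Suc j) * (1-R) * (1-R+\<delta>)^j)"
      unfolding g_def by simp
    also have "\<dots> = c * (y^j / fact j)"
      unfolding c_def y_def by (rule aux_series)
    finally show "c * (y^j / fact j) = g (Suc j)" by simp
  qed
  ultimately have "(\<lambda>j. g (Suc j)) sums (c * exp y)" by simp
  then have gs: "g sums (c * exp y)" using sums_Suc_iff[of g] by (simp add: g_def)
  have ts: "summable t"
    by (rule summable_comparison_test'[OF sums_summable[OF gs], of 0]) (use t0 tg in auto)
  have "poisson_pp_prob lam (has_gap_larger R) = suminf t"
    unfolding poisson_pp_prob_def t_def meas_def by simp
  also have "\<dots> \<le> suminf g" by (rule suminf_le[OF tg ts sums_summable[OF gs]])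
  also have "\<dots> = c * exp y" using gs by (rule sums_unique[symmetric])
  finally show ?thesis unfolding c_def y_def by (simp add: mult_ac)
qed


theorem lemma6:
  fixes n :: nat and p \<epsilon> :: real
  assumes "0 < p" "p < 1" "hf_dim p > 2" "n \<ge> 1" "\<epsilon> > 0"
    and "H_level n p \<epsilon> \<ge> 0"
  shows "poisson_pp_prob (hf_intensity n p (nat (H_level n p \<epsilon>)))
            (has_gap_larger (1 / sqrt (real n)))
         \<le> real n * exp (- ((1 - p) / 2) * real n powr \<epsilon>)"
proof -
  define q where "q = 1 - p"
  define h where "h = nat (H_level n p \<epsilon>)"
  define lam where "lam = hf_intensity n p h"
  define R where "R = 1 / sqrt (real n)"
  define N where "N = real n powr (1/2 - \<epsilon>) * p / 2"
  define x where "x = ln N / ln (2 / q)"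
  have q: "0 < q" "q < 1" using assms q_def by auto
  have n1: "real n \<ge> 1" using assms by simp
  have Npos: "N > 0" unfolding N_def using assms by simp
  have hx: "real h < x + 1"
  proof -
    have "real h = of_int (H_level n p \<epsilon>)" unfolding h_def using assms(6) by simp
    also have "\<dots> < x + 1" unfolding H_level_def x_def N_def q_def by linarith
    finally show ?thesis .
  qed
  have l2q: "ln (2/q) > 0" using q by simp
  have "(2/q) ^ h = (2/q) powr real h" using q by (simp add: powr_realpow)
  also have "\<dots> \<le> (2/q) powr (x + 1)"
    using q hx by (intro powr_mono) (auto simp: field_simps)
  also have "\<dots> = (2/q) * (2/q) powr x" using q by (simp add: powr_add)
  also have "(2/q) powr x = N"
    using q Npos l2q by (simp add: powr_def x_def)
  finally have pow_le: "(2/q) ^ h \<le> (2/q) * N" .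
  have qh: "(q/2) ^ h = 1 / (2/q) ^ h" by (simp add: power_divide)
  have pos2: "(2/q)^h > 0" using q by simp
  have sq: "sqrt (real n) = real n powr (1/2)" using n1 by (simp add: powr_half_sqrt)
  have lamR: "lam * R = sqrt (real n) * (p/2) * (q/2)^h"
    unfolding lam_def R_def hf_intensity_def q_def using n1
    by (simp add: field_simps real_sqrt_mult[symmetric] flip: real_sqrt_mult)
  have "lam * R \<ge> sqrt (real n) * (p/2) / ((2/q) * N)"
  proof -
    have "sqrt (real n) * (p/2) / ((2/q) * N) \<le> sqrt (real n) * (p/2) / (2/q)^h"
      using pow_le pos2 assms Npos q by (intro divide_left_mono) (auto intro!: mult_pos_pos)
    then show ?thesis unfolding lamR qh by simp
  qed
  also have "sqrt (real n) * (p/2) / ((2/q) * N) = (q/2) * (real n powr (1/2) / real n powr (1/2 - \<epsilon>))"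
    unfolding N_def sq using assms q by (simp add: field_simps)
  also have "real n powr (1/2) / real n powr (1/2 - \<epsilon>) = real n powr \<epsilon>"
    using n1 by (simp add: powr_diff[symmetric])
  finally have lamR_ge: "lam * R \<ge> (q/2) * real n powr \<epsilon>" .
  have lam0: "lam \<ge> 0" unfolding lam_def hf_intensity_def using assms by simp
  have lam_le: "lam \<le> real n / 2"
  proof -
    have "((1-p)/2)^h \<le> 1" using assms by (intro power_le_one) auto
    then have "p * ((1-p)/2)^h \<le> 1 * 1" using assms
      by (intro mult_mono) auto
    then have "real n / 2 * (p * ((1-p)/2)^h) \<le> real n / 2 * 1"
      by (intro mult_left_mono) auto
    then show ?thesis unfolding lam_def hf_intensity_def
      by (simp add: field_simps)
  qed
  have R: "0 < R" "R \<le> 1" unfolding R_def using n1 by auto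
  define m where "m = nat \<lceil>(1-R)/R + lam*(1-R)/ln 2\<rceil> + 1"
  define \<delta> where "\<delta> = (1-R) / real m"
  have m0: "m > 0" unfolding m_def by simp
  have mge: "real m \<ge> (1-R)/R + lam*(1-R)/ln 2" unfolding m_def by linarith
  have t1: "(1-R)/R \<ge> 0" "lam*(1-R)/ln 2 \<ge> 0" using R lam0 by auto
  have dR: "\<delta> \<le> R"
  proof -
    have "(1-R)/R \<le> real m" using mge t1 by linarith
    then have "1 - R \<le> R * real m" using R by (simp add: field_simps)
    then show ?thesis unfolding \<delta>_def using m0 R by (simp add: field_simps mult.commute)
  qed
  have ld: "lam * \<delta> \<le> ln 2"
  proof -
    have "lam*(1-R)/ln 2 \<le> real m" using mge t1 by linarith
    then have "lam*(1-R) \<le> ln 2 * real m" by (simp add: field_simps)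
    then show ?thesis unfolding \<delta>_def using m0 by (simp add: field_simps)
  qed
  have "poisson_pp_prob lam (has_gap_larger R) \<le> lam * (1-R) * exp (- lam) * exp (lam * (1-R+\<delta>))"
    by (rule series_bound[OF lam0 R m0 \<delta>_def dR])
  also have "\<dots> = lam * (1-R) * (exp (lam * \<delta>) * exp (- (lam * R)))"
  proof -
    have "exp (- lam) * exp (lam * (1-R+\<delta>)) = exp (lam * \<delta>) * exp (- (lam * R))"
      by (simp add: mult_exp_exp algebra_simps)
    then show ?thesis by (simp add: mult.assoc)
  qed
  also have "\<dots> \<le> (real n / 2) * 1 * (2 * exp (- ((q/2) * real n powr \<epsilon>)))"
  proof (intro mult_mono)
    show "exp (lam * \<delta>) \<le> 2" using ld by (metis exp_ln exp_le_cancel_iff zero_less_numeral)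
    show "exp (- (lam * R)) \<le> exp (- ((q/2) * real n powr \<epsilon>))" using lamR_ge by simp
  qed (use lam_le R lam0 in auto)
  also have "\<dots> = real n * exp (- ((1 - p) / 2) * real n powr \<epsilon>)" unfolding q_def by simp
  finally show ?thesis unfolding lam_def h_def R_def .
qed

end
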